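(* Let $\mathcal{R}$ be a finite valuation ring of order $q^r$, where $q$ is a power of an odd prime, and let $\mathcal{A}\subset\mathcal{R}$ with $|\mathcal{A}|\ge 2q^{r-1}$. For all constants $c_1,c_2>0$ there is a constant $C>0$ depending only on $c_1,c_2$ such that: (1) if $|\mathcal{A}|\ge c_1 q^{r-\frac13}$, then $\max\{|\mathcal{A}+\mathcal{A}|, |\mathcal{A}^2+\mathcal{A}^2|\}\ge C q^{\frac r2}|\mathcal{A}|^{\frac12}$; (2) if $c_1 q^{r-\frac38}\le|\mathcal{A}|\le c_2 q^{r-\frac13}$, then $\max\{|\mathcal{A}+\mathcal{A}|, |\mathcal{A}^2+\mathcal{A}^2|\}\ge C\,\dfrac{|\mathcal{A}|^2}{q^{\frac{2r-1}{2}}}$; (3) if $|\mathcal{A}+\mathcal{A}|\,|\mathcal{A}|^2\ge c_1 q^{3r-1}$ and $|\mathcal{A}|\le c_2 q^{r-\frac38}$, then $\max\{|\mathcal{A}+\mathcal{A}|, |\mathcal{A}^2+\mathcal{A}^2|\}\ge C q^{r/3}|\mathcal{A}|^{2/3}$.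
   Context: A finite valuation ring is a finite, local, principal commutative ring with identity. Its unique maximal ideal is $(z)$ for a uniformizer $z$; the residue field $\mathcal{R}/(z)$ has $q$ elements; $r$ is the smallest positive integer with $z^r=0$; then $|\mathcal{R}|=q^r$ and $|(z)|=q^{r-1}$. For $\mathcal{A}\subset\mathcal{R}$: $\mathcal{A}+\mathcal{A}=\{a+b: a,b\in\mathcal{A}\}$, $\mathcal{A}^2=\{x^2: x\in\mathcal{A}\}$, and $\mathcal{A}^2+\mathcal{A}^2=\{u+v: u,v\in\mathcal{A}^2\}$. *)

theory Defs
  imports "HOL-Analysis.Analysis" "HOL-Algebra.Algebra" "HOL-Computational_Algebra.Primes"
begin

definition finite_valuation_ring :: "('a, 'b) ring_scheme \<Rightarrow> bool" where
  "finite_valuation_ring R \<longleftrightarrow>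
     cring R \<and> finite (carrier R) \<and>
     (\<exists>!M. maximalideal M R) \<and>
     (\<forall>I. ideal I R \<longrightarrow> principalideal I R)"

definition ring_sumset :: "('a, 'b) ring_scheme \<Rightarrow> 'a set \<Rightarrow> 'a set \<Rightarrow> 'a set" where
  "ring_sumset R A B = {a \<oplus>\<^bsub>R\<^esub> b | a b. a \<in> A \<and> b \<in> B}"

definition ring_squares :: "('a, 'b) ring_scheme \<Rightarrow> 'a set \<Rightarrow> 'a set" where
  "ring_squares R A = {x \<otimes>\<^bsub>R\<^esub> x | x. x \<in> A}"

end

theory Submission imports Defs begin

lemma powr_pow_nat:
  fixes Q x :: real
  assumes "Q > 0" "real k * x = real m"
  shows "(Q powr x) ^ k = Q ^ m"
proof -
  have "(Q powr x) ^ k = Q powr (real k * x)" using powr_power[of Q x k] assms(1) by simp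
  also have "\<dots> = Q ^ m" using assms by (simp add: powr_realpow)
  finally show ?thesis .
qed

lemma sq_from_sqrt:
  fixes y Z :: real
  assumes "y \<le> sqrt Z" "0 \<le> y" "0 \<le> Z"
  shows "y^2 \<le> Z"
proof -
  have "y^2 \<le> (sqrt Z)^2" using power_mono[OF assms(1) assms(2)] .
  then show ?thesis using assms(3) by simp
qed

lemma var_bound:
  fixes N :: "'b \<Rightarrow> nat" and w n V :: nat
  assumes finCC: "finite CC" and sub: "SD \<subseteq> CC"
    and cardCC: "card CC = n * n" and n: "n > 0"
    and sumN: "(\<Sum>st\<in>CC. N st) = w * n"
    and sumN2: "(\<Sum>st\<in>CC. N st * N st) \<le> w * (w + V)"
  shows "real (\<Sum>st\<in>SD. N st) \<le> real (card SD) * real w / real n + sqrt (real (card SD)) * sqrt (real w * real V)"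
proof -
  define \<mu> where "\<mu> = real w / real n"
  define f where "f = (\<lambda>st. real (N st) - \<mu>)"
  have finSD: "finite SD" using finite_subset[OF sub finCC] .
  have A: "real (\<Sum>st\<in>SD. N st) = (\<Sum>st\<in>SD. f st) + real (card SD) * \<mu>"
    unfolding f_def by (simp add: sum_subtractf)
  have B: "(\<Sum>st\<in>SD. f st)^2 \<le> (\<Sum>st\<in>SD. (f st)^2) * real (card SD)"
    by (rule sum_squared_le_sum_of_squares)
  have C: "(\<Sum>st\<in>SD. (f st)^2) \<le> (\<Sum>st\<in>CC. (f st)^2)"
    by (rule sum_mono2[OF finCC sub]) simp
  have D: "(\<Sum>st\<in>CC. (f st)^2) = real (\<Sum>st\<in>CC. N st * N st) - 2 * \<mu> * real (\<Sum>st\<in>CC. N st) + real (card CC) * \<mu>^2"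
  proof -
    have "(\<Sum>st\<in>CC. (f st)^2) = (\<Sum>st\<in>CC. real (N st * N st) - 2 * \<mu> * real (N st) + \<mu>^2)"
      unfolding f_def by (rule sum.cong) (auto simp: power2_eq_square algebra_simps)
    also have "\<dots> = real (\<Sum>st\<in>CC. N st * N st) - 2 * \<mu> * real (\<Sum>st\<in>CC. N st) + real (card CC) * \<mu>^2"
      by (simp add: sum.distrib sum_subtractf sum_distrib_left)
    finally show ?thesis .
  qed
  have E: "real (\<Sum>st\<in>CC. N st * N st) - 2 * \<mu> * real (\<Sum>st\<in>CC. N st) + real (card CC) * \<mu>^2
        = real (\<Sum>st\<in>CC. N st * N st) - real w * real w"
    unfolding sumN cardCC \<mu>_def using n by (simp add: field_simps power2_eq_square)
  have F: "real (\<Sum>st\<in>CC. N st * N st) - real w * real w \<le> real w * real V"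
  proof -
    have "real (\<Sum>st\<in>CC. N st * N st) \<le> real (w * (w + V))" using sumN2 by linarith
    then show ?thesis by (simp add: algebra_simps)
  qed
  have G: "(\<Sum>st\<in>SD. f st)^2 \<le> real (card SD) * (real w * real V)"
  proof -
    have "(\<Sum>st\<in>SD. (f st)^2) \<le> real w * real V" using C D E F by linarith
    then have "(\<Sum>st\<in>SD. (f st)^2) * real (card SD) \<le> real w * real V * real (card SD)"
      by (rule mult_right_mono) simp
    then show ?thesis using B by (simp add: algebra_simps)
  qed
  have H: "(\<Sum>st\<in>SD. f st) \<le> sqrt (real (card SD)) * sqrt (real w * real V)"
    using real_le_rsqrt[OF G] by (simp add: real_sqrt_mult)
  show ?thesis using A H unfolding \<mu>_def by simp
qed

lemma alt_lemma:
  fixes a w n c sd M Q :: real and r :: nat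
  assumes h: "a * w \<le> sd * w / n + sqrt sd * sqrt (w * (2 * c * n))"
    and sdM: "sd \<le> M^2" and w: "w \<ge> a^2/2" and a: "a > 0" and n: "n = Q^r" and c: "c = Q^(r-1)"
    and Q: "Q > 0" and r: "r \<ge> 1" and sd0: "sd \<ge> 0"
  shows "Q^r * a \<le> 2 * M^2 \<or> a^4 \<le> 16 * Q^(2*r-1) * M^2"
proof -
  have "a^2 > 0" using a by simp
  then have w0: "w > 0" using w by linarith
  have n0: "n > 0" using n Q by simp
  have c0: "c > 0" using c Q by simp
  have cn: "c * n = Q^(2*r-1)"
  proof -
    have "2*r-1 = (r-1) + r" using r by simp
    then show ?thesis unfolding c n by (simp add: power_add)
  qed
  consider (i) "a * w / 2 \<le> sd * w / n" | (ii) "a * w / 2 \<le> sqrt sd * sqrt (w * (2 * c * n))"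
    using h by linarith
  then show ?thesis
  proof cases
    case i
    then have "a * n / 2 \<le> sd" using w0 n0 by (simp add: field_simps)
    moreover have "Q^r * a = a * n" using n by simp
    ultimately have "Q^r * a \<le> 2 * M^2" using sdM by linarith
    then show ?thesis by simp
  next
    case ii
    have Z0: "0 \<le> sd * (w * (2 * c * n))" using sd0 w0 c0 n0 by simp
    have "(a * w / 2)^2 \<le> sd * (w * (2 * c * n))"
      by (rule sq_from_sqrt) (use ii a w0 Z0 in \<open>auto simp: real_sqrt_mult\<close>)
    then have "a^2 * w * w \<le> 8 * sd * c * n * w" by (simp add: power2_eq_square algebra_simps)
    then have "a^2 * w \<le> 8 * sd * c * n" using w0 by (simp add: mult_le_cancel_right)
    moreover have "a^2 * (a^2/2) \<le> a^2 * w" by (rule mult_left_mono) (use w in auto)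
    moreover have "a^2 * (a^2/2) = a^4/2" by (simp add: power4_eq_xxxx power2_eq_square algebra_simps)
    moreover have "8 * sd * c * n = 8 * (c * n) * sd" by (simp add: algebra_simps)
    ultimately have "a^4 \<le> 16 * (c * n) * sd" by linarith
    also have "\<dots> \<le> 16 * (c * n) * M^2" using sdM c0 n0 by simp
    finally show ?thesis unfolding cn by simp
  qed
qed

lemma C_facts:
  fixes c1 c2 :: real
  assumes c1: "c1 > 0" and c2: "c2 > 0"
  defines "e \<equiv> min 1 c1" and "d \<equiv> max 1 c2"
  defines "C \<equiv> e^2 / (4 * d^3)"
  shows "C > 0" "C^2 \<le> 1/16" "C^2 \<le> c1^3/16" "2 * C^2 * c2^3 \<le> 1" "C^3 * c2^8 \<le> c1^3"
proof -
  have e0: "e > 0" and e1: "e \<le> 1" and ec: "e \<le> c1" unfolding e_def using c1 by auto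
  have d1: "d \<ge> 1" and dc: "c2 \<le> d" unfolding d_def by auto
  have D1: "d^3 \<ge> 1" using d1 by simp
  have D0: "d^3 > 0" using D1 by linarith
  show C0: "C > 0" unfolding C_def using e0 D0 by simp
  have CD: "C * (4 * d^3) = e^2" unfolding C_def using D0 by simp
  have e2: "e^2 \<le> 1" using e0 e1 by (simp add: power_le_one)
  have e2e: "e^2 \<le> e" using e0 e1 by (simp add: power2_eq_square mult_left_le)
  have Cle: "C \<le> e^2 / 4"
  proof -
    have "C * 4 \<le> C * (4 * d^3)" using C0 D1 by simp
    then show ?thesis using CD by simp
  qed
  have C14: "C \<le> 1/4" using Cle e2 by simp
  have "C^2 \<le> (1/4)^2" by (rule power_mono[OF C14]) (use C0 in simp)
  then show "C^2 \<le> 1/16" by (simp add: power2_eq_square)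
  have "C^2 \<le> (e^2/4)^2" by (rule power_mono[OF Cle]) (use C0 in simp)
  also have "\<dots> = e^4/16" by (simp add: power2_eq_square power4_eq_xxxx)
  also have "\<dots> \<le> e^3/16"
  proof -
    have "e^4 \<le> e^3" by (rule power_decreasing) (use e0 e1 in auto)
    then show ?thesis by simp
  qed
  also have "\<dots> \<le> c1^3/16"
  proof -
    have "e^3 \<le> c1^3" by (rule power_mono[OF ec]) (use e0 in simp)
    then show ?thesis by simp
  qed
  finally show "C^2 \<le> c1^3/16" .
  have C4D: "C * (4 * d^3) \<le> 1" using CD e2 by simp
  have "2 * C^2 * c2^3 \<le> 2 * C^2 * d^3"
  proof -
    have "c2^3 \<le> d^3" by (rule power_mono[OF dc]) (use c2 in simp)
    then show ?thesis using C0 by simp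
  qed
  also have "\<dots> = (C * (4 * d^3)) * (C / 2)" by (simp add: power2_eq_square)
  also have "\<dots> \<le> 1 * (C / 2)" by (rule mult_right_mono[OF C4D]) (use C0 in simp)
  also have "\<dots> \<le> 1" using C14 by simp
  finally show "2 * C^2 * c2^3 \<le> 1" .
  have Cd: "C * d^3 \<le> c1"
  proof -
    have "C * d^3 \<le> C * (4 * d^3)" using C0 D0 by simp
    also have "\<dots> \<le> e" using CD e2e by simp
    finally show ?thesis using ec by simp
  qed
  have "C^3 * c2^8 \<le> C^3 * d^8"
  proof -
    have "c2^8 \<le> d^8" by (rule power_mono[OF dc]) (use c2 in simp)
    then show ?thesis using C0 by simp
  qed
  also have "\<dots> \<le> C^3 * d^9"
  proof -
    have "d^8 \<le> d^9" by (rule power_increasing) (use d1 in auto)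
    then show ?thesis using C0 by simp
  qed
  also have "\<dots> = (C * d^3)^3" by (simp add: power_mult_distrib power_mult[symmetric])
  also have "\<dots> \<le> c1^3" by (rule power_mono[OF Cd]) (use C0 D0 in simp)
  finally show "C^3 * c2^8 \<le> c1^3" .
qed

lemma powr_cast:
  fixes Q x :: real
  assumes "Q > 0" "x = real m"
  shows "Q powr x = Q ^ m"
  using assms by (simp add: powr_realpow)

lemma P1:
  fixes Q a M C c1 :: real and r :: nat
  assumes Q: "Q > 0" and r: "r \<ge> 1" and a: "a > 0" and M: "M \<ge> 0" and C: "C > 0"
    and alt: "Q^r * a \<le> 2 * M^2 \<or> a^4 \<le> 16 * Q^(2*r-1) * M^2"
    and Cs1: "C^2 \<le> 1/16" and Cs2: "C^2 \<le> c1^3/16" and c1: "c1 > 0"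
    and hyp: "a \<ge> c1 * Q powr (real r - 1/3)"
  shows "M \<ge> C * Q powr (real r / 2) * a powr (1/2)"
proof -
  define K where "K = Q^(2*r-1)"
  have K0: "K > 0" unfolding K_def using Q by simp
  have QK: "Q^r * K = Q^(3*r-1)"
  proof -
    have "r + (2*r-1) = 3*r-1" using r by simp
    then show ?thesis unfolding K_def by (metis power_add)
  qed
  have t: "c1^3 * Q^(3*r-1) \<le> a^3"
  proof -
    have "(c1 * Q powr (real r - 1/3))^3 \<le> a^3" by (rule power_mono[OF hyp]) (use c1 in simp)
    moreover have "(Q powr (real r - 1/3))^3 = Q^(3*r-1)"
      by (rule powr_pow_nat[OF Q]) (use r in \<open>simp add: of_nat_diff algebra_simps\<close>)
    ultimately show ?thesis by (simp add: power_mult_distrib)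
  qed
  have sq: "(C * Q powr (real r / 2) * a powr (1/2))^2 = C^2 * Q^r * a"
  proof -
    have "(Q powr (real r / 2))^2 = Q^r" by (rule powr_pow_nat[OF Q]) simp
    moreover have "(a powr (1/2))^2 = a^1" by (rule powr_pow_nat[OF a]) simp
    ultimately show ?thesis by (simp add: power_mult_distrib)
  qed
  have goal: "C^2 * Q^r * a \<le> M^2"
    using alt
  proof
    assume h: "Q^r * a \<le> 2 * M^2"
    have "C^2 * Q^r * a \<le> (1/16) * (Q^r * a)"
      using mult_right_mono[OF Cs1, of "Q^r * a"] Q a by (simp add: mult.assoc)
    then show ?thesis using h zero_le_power2[of M] by linarith
  next
    assume h: "a^4 \<le> 16 * Q^(2*r-1) * M^2"
    have "(C^2 * Q^r * a) * (16 * K) = (16 * C^2) * (Q^r * K) * a" by (simp add: algebra_simps)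
    also have "\<dots> \<le> c1^3 * (Q^r * K) * a"
    proof -
      have "16 * C^2 \<le> c1^3" using Cs2 by simp
      then show ?thesis using Q a K0 by (simp add: mult_right_mono)
    qed
    also have "\<dots> = (c1^3 * Q^(3*r-1)) * a" unfolding QK by simp
    also have "\<dots> \<le> a^3 * a" by (rule mult_right_mono[OF t]) (use a in simp)
    also have "\<dots> = a^4" by (simp add: power_def)
    also have "\<dots> \<le> M^2 * (16 * K)" using h unfolding K_def by (simp add: algebra_simps)
    finally show ?thesis using K0 by (simp add: mult_le_cancel_right)
  qed
  show ?thesis
  proof (rule power2_le_imp_le)
    show "(C * Q powr (real r / 2) * a powr (1/2))^2 \<le> M^2" using sq goal by simp
    show "0 \<le> M" by (rule M)
  qed
qed

lemma P2:
  fixes Q a M C c2 :: real and r :: nat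
  assumes Q: "Q > 0" and r: "r \<ge> 1" and a: "a > 0" and M: "M \<ge> 0" and C: "C > 0"
    and alt: "Q^r * a \<le> 2 * M^2 \<or> a^4 \<le> 16 * Q^(2*r-1) * M^2"
    and Cs1: "C^2 \<le> 1/16" and Cs3: "2 * C^2 * c2^3 \<le> 1" and c2: "c2 > 0"
    and hyp: "a \<le> c2 * Q powr (real r - 1/3)"
  shows "M \<ge> C * a^2 / Q powr ((2 * real r - 1) / 2)"
proof -
  define K where "K = Q^(2*r-1)"
  have K0: "K > 0" unfolding K_def using Q by simp
  have QK: "Q^r * K = Q^(3*r-1)"
  proof -
    have "r + (2*r-1) = 3*r-1" using r by simp
    then show ?thesis unfolding K_def by (metis power_add)
  qed
  have t: "a^3 \<le> c2^3 * Q^(3*r-1)"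
  proof -
    have "a^3 \<le> (c2 * Q powr (real r - 1/3))^3" by (rule power_mono[OF hyp]) (use a in simp)
    moreover have "(Q powr (real r - 1/3))^3 = Q^(3*r-1)"
      by (rule powr_pow_nat[OF Q]) (use r in \<open>simp add: of_nat_diff algebra_simps\<close>)
    ultimately show ?thesis by (simp add: power_mult_distrib)
  qed
  have sq: "(C * a^2 / Q powr ((2 * real r - 1) / 2))^2 = C^2 * a^4 / K"
  proof -
    have "(Q powr ((2 * real r - 1) / 2))^2 = Q^(2*r-1)"
      by (rule powr_pow_nat[OF Q]) (use r in \<open>simp add: of_nat_diff field_simps\<close>)
    then show ?thesis unfolding K_def by (simp add: power_mult_distrib power_divide power4_eq_xxxx power2_eq_square)
  qed
  have goal: "C^2 * a^4 \<le> K * M^2"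
    using alt
  proof
    assume h: "Q^r * a \<le> 2 * M^2"
    have "C^2 * a^4 = C^2 * a^3 * a" by (simp add: power_def)
    also have "\<dots> \<le> C^2 * (c2^3 * Q^(3*r-1)) * a"
      using t C a by (simp add: mult_right_mono)
    also have "\<dots> = (2 * C^2 * c2^3) * K * ((Q^r * a) / 2)" unfolding QK[symmetric] by (simp add: algebra_simps)
    also have "\<dots> \<le> 1 * K * ((Q^r * a) / 2)"
      by (rule mult_right_mono[OF mult_right_mono[OF Cs3]]) (use K0 Q a in simp_all)
    also have "\<dots> \<le> K * M^2" using h K0 by simp
    finally show ?thesis .
  next
    assume h: "a^4 \<le> 16 * Q^(2*r-1) * M^2"
    have "C^2 * a^4 \<le> (1/16) * a^4" by (rule mult_right_mono[OF Cs1]) simp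
    also have "\<dots> \<le> K * M^2" using h unfolding K_def by simp
    finally show ?thesis .
  qed
  show ?thesis
  proof (rule power2_le_imp_le)
    show "(C * a^2 / Q powr ((2 * real r - 1) / 2))^2 \<le> M^2"
      unfolding sq using goal K0 by (simp add: divide_le_eq mult.commute)
    show "0 \<le> M" by (rule M)
  qed
qed

lemma P3:
  fixes Q a M C c1 c2 S1 :: real and r :: nat
  assumes Q: "Q > 0" and r: "r \<ge> 1" and a: "a > 0" and C: "C > 0"
    and S1: "S1 \<le> M" and c1: "c1 > 0" and c2: "c2 > 0"
    and Cs5: "C^3 * c2^8 \<le> c1^3"
    and hyp1: "c1 * Q powr (3 * real r - 1) \<le> S1 * a^2"
    and hyp2: "a \<le> c2 * Q powr (real r - 3/8)"
  shows "M \<ge> C * Q powr (real r / 3) * a powr (2/3)"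
proof -
  define T where "T = Q^(3*r-1)"
  have T0: "T > 0" unfolding T_def using Q by simp
  have h1: "c1 * T \<le> S1 * a^2"
    using hyp1 powr_cast[OF Q, of "3 * real r - 1" "3*r-1"] r unfolding T_def by (simp add: of_nat_diff)
  have S1pos: "S1 \<ge> c1 * T / a^2" using h1 a by (simp add: field_simps)
  have h2: "a^8 \<le> c2^8 * Q^(8*r-3)"
  proof -
    have "a^8 \<le> (c2 * Q powr (real r - 3/8))^8" by (rule power_mono[OF hyp2]) (use a in simp)
    moreover have "(Q powr (real r - 3/8))^8 = Q^(8*r-3)"
      by (rule powr_pow_nat[OF Q]) (use r in \<open>simp add: of_nat_diff algebra_simps\<close>)
    ultimately show ?thesis by (simp add: power_mult_distrib)
  qed
  have cube: "(C * Q powr (real r / 3) * a powr (2/3))^3 = C^3 * Q^r * a^2"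
  proof -
    have "(Q powr (real r / 3))^3 = Q^r" by (rule powr_pow_nat[OF Q]) simp
    moreover have "(a powr (2/3))^3 = a^2" by (rule powr_pow_nat[OF a]) simp
    ultimately show ?thesis by (simp add: power_mult_distrib)
  qed
  have QQ: "Q^r * Q^(8*r-3) = T^3"
  proof -
    have "r + (8*r-3) = (3*r-1) * 3" using r by simp
    then show ?thesis unfolding T_def by (metis power_add power_mult)
  qed
  have key: "C^3 * Q^r * a^2 * a^6 \<le> (c1 * T)^3"
  proof -
    have "C^3 * Q^r * a^2 * a^6 = C^3 * Q^r * a^8" by (simp add: power_add[symmetric] mult.assoc)
    also have "\<dots> \<le> C^3 * Q^r * (c2^8 * Q^(8*r-3))"
      by (rule mult_left_mono[OF h2]) (use C Q in simp)
    also have "\<dots> = (C^3 * c2^8) * (Q^r * Q^(8*r-3))" by (simp add: algebra_simps)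
    also have "\<dots> \<le> c1^3 * (Q^r * Q^(8*r-3))" by (rule mult_right_mono[OF Cs5]) (use Q in simp)
    also have "\<dots> = (c1 * T)^3" unfolding QQ by (simp add: power_mult_distrib)
    finally show ?thesis .
  qed
  have "(c1 * T)^3 \<le> (S1 * a^2)^3" by (rule power_mono[OF h1]) (use c1 T0 in simp)
  also have "\<dots> = S1^3 * a^6" by (simp add: power_mult_distrib power_mult[symmetric])
  finally have "C^3 * Q^r * a^2 * a^6 \<le> S1^3 * a^6" using key by linarith
  then have "C^3 * Q^r * a^2 \<le> S1^3" using a by (simp add: mult_le_cancel_right)
  also have "S1^3 \<le> M^3"
  proof (rule power_mono[OF S1])
    have "c1 * T / a^2 > 0" using c1 T0 a by simp
    then show "0 \<le> S1" using S1pos by linarith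
  qed
  finally have "(C * Q powr (real r / 3) * a powr (2/3))^3 \<le> M^3" unfolding cube .
  moreover have "M \<ge> 0" using S1 S1pos c1 T0 a
    by (smt (verit) divide_pos_pos zero_less_power mult_pos_pos)
  ultimately show ?thesis by (rule power_le_imp_le_base[of _ 2, simplified])
qed


lemma cast_help: "(x::nat) \<le> y + q ^ k \<Longrightarrow> real x \<le> real y + real q ^ k"
  by (metis of_nat_add of_nat_le_iff of_nat_power)

lemma wbig_help: "0 \<le> (a::real) \<Longrightarrow> a \<le> 2 * b \<Longrightarrow> a^2/2 \<le> a * b"
proof -
  assume h0: "0 \<le> a" and h: "a \<le> 2 * b"
  have "a * a \<le> a * (2 * b)" by (rule mult_left_mono[OF h h0])
  then show ?thesis by (simp add: power2_eq_square)
qed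

lemma sq_help: "(x::nat) \<le> m * m \<Longrightarrow> real x \<le> (real m)^2"
  by (metis of_nat_le_iff of_nat_mult power2_eq_square)

lemma card_eq_sum_fibers:
  assumes "finite SS"
  shows "card SS = (\<Sum>y\<in>f ` SS. card {x \<in> SS. f x = y})"
proof -
  have SS: "SS = (\<Union>y\<in>f ` SS. {x \<in> SS. f x = y})" by auto
  show ?thesis
    by (subst SS, rule card_UN_disjoint) (use assms in auto)
qed

lemma card_fibers_le:
  assumes "finite SS" "\<And>y. y \<in> f ` SS \<Longrightarrow> card {x \<in> SS. f x = y} \<le> k"
  shows "card SS \<le> k * card (f ` SS)"
proof -
  have "card SS = (\<Sum>y\<in>f ` SS. card {x \<in> SS. f x = y})" by (rule card_eq_sum_fibers[OF assms(1)])
  also have "\<dots> \<le> (\<Sum>y\<in>f ` SS. k)" by (rule sum_mono) (use assms in auto)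
  finally show ?thesis by (simp add: mult.commute)
qed

lemma card_le_2: "card {a, b} \<le> 2" by (cases "a = b") auto

lemma card_fibers:
  assumes "finite SS" "\<And>x. x \<in> SS \<Longrightarrow> card {x' \<in> SS. h x' = h x} = k"
  shows "card SS = card (h ` SS) * k"
proof -
  have SS: "SS = (\<Union>y\<in>h ` SS. {x \<in> SS. h x = y})" by auto
  have "card SS = (\<Sum>y\<in>h ` SS. card {x \<in> SS. h x = y})"
    by (subst SS, rule card_UN_disjoint) (use assms in auto)
  also have "\<dots> = (\<Sum>y\<in>h ` SS. k)"
    by (rule sum.cong) (use assms in auto)
  finally show ?thesis by simp
qed

lemma invol_even:
  assumes "finite S" "\<And>x. x \<in> S \<Longrightarrow> f x \<in> S \<and> f (f x) = x \<and> f x \<noteq> x"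
  shows "even (card S)"
  using assms
proof (induction "card S" arbitrary: S rule: less_induct)
  case less
  show ?case
  proof (cases "S = {}")
    case True then show ?thesis by simp
  next
    case False
    then obtain x where x: "x \<in> S" by auto
    let ?S' = "S - {x, f x}"
    have fx: "f x \<in> S" "f x \<noteq> x" using less.prems(2)[OF x] by auto
    have c: "card S = card ?S' + 2"
    proof -
      have "card ?S' = card S - card {x, f x}"
        by (rule card_Diff_subset) (use x fx less.prems in auto)
      moreover have "card {x, f x} = 2" using fx by auto
      moreover have "card S \<ge> card {x, f x}"
        by (rule card_mono) (use x fx less.prems in auto)
      ultimately show ?thesis by linarith
    qed
    have "even (card ?S')"
    proof (rule less.hyps)
      show "card ?S' < card S" using c by simp
      show "finite ?S'" using less.prems by simp
      fix y assume y: "y \<in> ?S'"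
      have h: "f y \<in> S" "f (f y) = y" "f y \<noteq> y" using less.prems(2)[of y] y by auto
      have "f y \<noteq> x"
      proof
        assume "f y = x" then have "f (f y) = f x" by simp
        then have "y = f x" using h by simp
        then show False using y by simp
      qed
      moreover have "f y \<noteq> f x"
      proof
        assume "f y = f x" then have "f (f y) = f (f x)" by simp
        then have "y = x" using h less.prems(2)[OF x] by simp
        then show False using y by simp
      qed
      ultimately show "f y \<in> ?S' \<and> f (f y) = y \<and> f y \<noteq> y" using h by auto
    qed
    then show ?thesis using c by simp
  qed
qed

lemma (in cring) iden4: assumes "b \<in> carrier R" "b' \<in> carrier R" "s1 \<in> carrier R" "s2 \<in> carrier R"
 shows "((s1 \<ominus> b) \<otimes> (s1 \<ominus> b) \<ominus> (s1 \<ominus> b') \<otimes> (s1 \<ominus> b')) \<ominus> ((s2 \<ominus> b) \<otimes> (s2 \<ominus> b) \<ominus> (s2 \<ominus> b') \<otimes> (s2 \<ominus> b'))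
      = ((\<one> \<oplus> \<one>) \<otimes> (b' \<ominus> b)) \<otimes> (s1 \<ominus> s2)"
  using assms by algebra
lemma (in cring) link: assumes "x \<in> carrier R" "y \<in> carrier R" "u \<in> carrier R" "v \<in> carrier R"
 shows "x \<ominus> y = ((x \<oplus> u) \<ominus> (y \<oplus> v)) \<oplus> (v \<ominus> u)"
  using assms by algebra

lemma (in cring) exists_max:
  assumes fin: "finite (carrier R)" and I: "ideal I R" and one: "\<one> \<notin> I"
  shows "\<exists>M. maximalideal M R \<and> I \<subseteq> M"
proof -
  define S where "S = {J. ideal J R \<and> I \<subseteq> J \<and> \<one> \<notin> J}"
  have sub: "S \<subseteq> Set.Pow (carrier R)"
  proof
    fix J assume "J \<in> S"
    then have "ideal J R" unfolding S_def by simp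
    then have "J \<subseteq> carrier R" using ideal.Icarr[of J R] by blast
    then show "J \<in> Set.Pow (carrier R)" by simp
  qed
  have finS: "finite S" using finite_subset[OF sub] fin by auto
  have IS: "I \<in> S" using I one unfolding S_def by auto
  define k where "k = Max (card ` S)"
  have "k \<in> card ` S" unfolding k_def using finS IS by (intro Max_in) auto
  then obtain M where MS: "M \<in> S" and kM: "k = card M" by auto
  have maxc: "\<And>J. J \<in> S \<Longrightarrow> card J \<le> card M"
    using kM finS unfolding k_def by (metis Max_ge finite_imageI imageI)
  have Mi: "ideal M R" and IM: "I \<subseteq> M" and oM: "\<one> \<notin> M" using MS unfolding S_def by auto
  have "maximalideal M R"
  proof (rule maximalidealI[OF Mi])
    show "carrier R \<noteq> M" using oM by auto
    fix J assume J: "ideal J R" "M \<subseteq> J" "J \<subseteq> carrier R"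
    show "J = M \<or> J = carrier R"
    proof (cases "\<one> \<in> J")
      case True then show ?thesis using ideal.one_imp_carrier[OF J(1)] by auto
    next
      case False
      then have "J \<in> S" using J IM unfolding S_def by auto
      then have "card J \<le> card M" by (rule maxc)
      moreover have "finite J" using J(3) fin finite_subset by auto
      ultimately have "J = M" using J(2) card_seteq by blast
      then show ?thesis by simp
    qed
  qed
  then show ?thesis using IM by auto
qed

locale fvr = cring R for R (structure) +
  fixes z
  assumes fin: "finite (carrier R)" and zc: "z \<in> carrier R"
    and zmax: "maximalideal (PIdl z) R"
    and uniq: "\<And>M. maximalideal M R \<Longrightarrow> M = PIdl z"
begin

lemma m_ideal: "ideal (PIdl z) R" using cgenideal_ideal[OF zc] .

interpretation m: ideal "PIdl z" R by (rule m_ideal)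

lemma m_sub: "PIdl z \<subseteq> carrier R" using ideal.Icarr[OF m_ideal] by blast

lemma one_notin_m: "\<one> \<notin> PIdl z"
  using maximalideal.I_notcarr[OF zmax] ideal.one_imp_carrier[OF m_ideal] by auto

lemma nonunit_in_m:
  assumes x: "x \<in> carrier R" and nu: "x \<notin> Units R"
  shows "x \<in> PIdl z"
proof -
  have I: "ideal (PIdl x) R" using cgenideal_ideal[OF x] .
  have "\<one> \<notin> PIdl x"
  proof
    assume "\<one> \<in> PIdl x"
    then obtain y where y: "y \<in> carrier R" "\<one> = y \<otimes> x" unfolding cgenideal_def by auto
    then have "x \<in> Units R" using x m_comm unfolding Units_def by auto
    then show False using nu by simp
  qed
  then obtain M where "maximalideal M R" "PIdl x \<subseteq> M" using exists_max[OF fin I] by auto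
  then show ?thesis using uniq cgenideal_self[OF x] by auto
qed

lemma m_nonunit:
  assumes x: "x \<in> PIdl z" shows "x \<notin> Units R"
proof
  assume u: "x \<in> Units R"
  have "inv x \<otimes> x \<in> PIdl z"
    using ideal.I_l_closed[OF m_ideal x, of "inv x"] u by auto
  then show False using u one_notin_m by simp
qed

lemma unit_iff: "x \<in> carrier R \<Longrightarrow> x \<in> Units R \<longleftrightarrow> x \<notin> PIdl z"
  using nonunit_in_m m_nonunit by blast

lemma pow_in_m: "(p::nat) > 0 \<Longrightarrow> z [^] p \<in> PIdl z"
proof -
  assume "p > 0"
  then obtain k where "p = Suc k" by (cases p) auto
  then show ?thesis using zc unfolding cgenideal_def by auto
qed

lemma z_nilpotent: "\<exists>n::nat>0. z [^] n = \<zero>"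
proof -
  define N where "N = card (carrier R)"
  have "\<not> inj_on (\<lambda>n::nat. z [^] n) {..N}"
  proof
    assume "inj_on (\<lambda>n::nat. z [^] n) {..N}"
    then have "card ((\<lambda>n. z [^] n) ` {..N}) = N + 1" by (simp add: card_image)
    moreover have "(\<lambda>n. z [^] n) ` {..N} \<subseteq> carrier R" using zc by auto
    ultimately have "N + 1 \<le> N" using card_mono[OF fin] unfolding N_def by metis
    then show False by simp
  qed
  then obtain a b :: nat where ab: "a \<noteq> b" "z [^] a = z [^] b"
    unfolding inj_on_def by auto
  then obtain a b :: nat where ab: "a < b" "z [^] a = z [^] b"
    by (metis linorder_neqE_nat)
  define p where "p = b - a"
  have p: "p > 0" "b = a + p" using ab unfolding p_def by auto
  have e: "z [^] a \<otimes> (\<one> \<ominus> z [^] p) = \<zero>"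
  proof -
    have za: "z [^] a \<in> carrier R" and zp: "z [^] p \<in> carrier R" using zc by auto
    have "z [^] a \<otimes> (\<one> \<ominus> z [^] p) = z [^] a \<ominus> z [^] a \<otimes> z [^] p"
      using za zp by algebra
    also have "z [^] a \<otimes> z [^] p = z [^] b" by (simp only: p(2) nat_pow_mult[OF zc])
    also have "z [^] a \<ominus> z [^] b = \<zero>" unfolding ab(2)[symmetric] using za by algebra
    finally show ?thesis .
  qed
  have nm: "\<one> \<ominus> z [^] p \<notin> PIdl z"
  proof
    assume h: "\<one> \<ominus> z [^] p \<in> PIdl z"
    have "(\<one> \<ominus> z [^] p) \<oplus> z [^] p \<in> PIdl z"
      using m.a_closed[OF h pow_in_m[OF p(1)]] .
    moreover have zp: "z [^] p \<in> carrier R" using zc by simp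
    moreover have "(\<one> \<ominus> z [^] p) \<oplus> z [^] p = \<one>" using zp by algebra
    ultimately show False using one_notin_m by simp
  qed
  have u: "\<one> \<ominus> z [^] p \<in> Units R" using nm unit_iff zc by auto
  have "z [^] a = \<zero>"
  proof -
    have "z [^] a = z [^] a \<otimes> ((\<one> \<ominus> z [^] p) \<otimes> inv (\<one> \<ominus> z [^] p))"
      using u zc by simp
    also have "\<dots> = (z [^] a \<otimes> (\<one> \<ominus> z [^] p)) \<otimes> inv (\<one> \<ominus> z [^] p)"
      using u zc by (simp add: m_assoc)
    also have "\<dots> = \<zero>" using e u by simp
    finally show ?thesis .
  qed
  then have "z [^] Suc a = \<zero>" using zc by simp
  then show ?thesis by blast
qed

definition rr where "rr = (LEAST n::nat. n > 0 \<and> z [^] n = \<zero>)"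

lemma zero_in_m: "\<zero> \<in> PIdl z" by (rule m.zero_closed)

lemma one_ne_zero: "\<one> \<noteq> \<zero>" using zero_in_m one_notin_m by auto

lemma rr_props: "rr > 0" "z [^] rr = \<zero>" "\<And>i. i < rr \<Longrightarrow> z [^] i \<noteq> \<zero>"
proof -
  have ex: "\<exists>n::nat. n > 0 \<and> z [^] n = \<zero>" using z_nilpotent by blast
  have L: "rr > 0 \<and> z [^] rr = \<zero>" unfolding rr_def by (rule LeastI_ex[OF ex])
  then show "rr > 0" "z [^] rr = \<zero>" by auto
  fix i :: nat assume i: "i < rr"
  show "z [^] i \<noteq> \<zero>"
  proof (cases "i = 0")
    case True then show ?thesis using one_ne_zero by simp
  next
    case False
    then show ?thesis using not_less_Least[of i "\<lambda>n::nat. n > 0 \<and> z [^] n = \<zero>"] i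
      unfolding rr_def by auto
  qed
qed

definition qq where "qq = card (a_rcosets (PIdl z))"

lemma qq_def': "qq = card (carrier (R Quot (PIdl z)))"
  unfolding qq_def FactRing_def by simp

lemma q_mult: "qq * card (PIdl z) = card (carrier R)"
  using a_lagrange[OF fin ideal.axioms(1)[OF m_ideal]] unfolding qq_def order_def by simp

lemma card_m_pos: "card (PIdl z) > 0"
  using zero_in_m finite_subset[OF m_sub fin] card_gt_0_iff by blast

lemma step_card:
  assumes i: "i < rr"
  shows "card (PIdl (z [^] i)) = qq * card (PIdl (z [^] Suc i))"
proof -
  define w where "w = z [^] i"
  have wc: "w \<in> carrier R" unfolding w_def using zc by simp
  have wnz: "w \<noteq> \<zero>" unfolding w_def using rr_props(3)[OF i] .
  define K where "K = {x \<in> carrier R. x \<otimes> w = \<zero>}"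
  define h where "h = (\<lambda>x. x \<otimes> w)"
  have finK: "finite K" unfolding K_def using fin by simp
  have K0: "\<zero> \<in> K" unfolding K_def using wc by simp
  have cK: "card K > 0" using finK K0 card_gt_0_iff by blast
  have Km: "K \<subseteq> PIdl z"
  proof
    fix k assume k: "k \<in> K"
    then have kc: "k \<in> carrier R" and kw: "k \<otimes> w = \<zero>" unfolding K_def by auto
    have "k \<notin> Units R"
    proof
      assume u: "k \<in> Units R"
      have "w = inv k \<otimes> (k \<otimes> w)" using u wc by (metis Units_closed Units_inv_closed Units_l_inv l_one m_assoc)
      then show False using kw wnz u wc by simp
    qed
    then show "k \<in> PIdl z" using nonunit_in_m kc by blast
  qed
  have fib: "{x' \<in> T. h x' = h x} = (\<lambda>k. k \<oplus> x) ` K"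
    if T: "T = carrier R \<or> T = PIdl z" and x: "x \<in> T" for T x
  proof -
    have TC: "T \<subseteq> carrier R" using T m_sub by auto
    have xc: "x \<in> carrier R" using x TC by auto
    show ?thesis
    proof
      show "{x' \<in> T. h x' = h x} \<subseteq> (\<lambda>k. k \<oplus> x) ` K"
      proof
        fix x' assume "x' \<in> {x' \<in> T. h x' = h x}"
        then have x'c: "x' \<in> carrier R" and e: "x' \<otimes> w = x \<otimes> w" using TC unfolding h_def by auto
        have "(x' \<ominus> x) \<otimes> w = x' \<otimes> w \<ominus> x \<otimes> w" using x'c xc wc by algebra
        also have "\<dots> = \<zero>" unfolding e using xc wc by algebra
        finally have "x' \<ominus> x \<in> K" unfolding K_def using x'c xc by simp
        moreover have "x' = (x' \<ominus> x) \<oplus> x" using x'c xc by algebra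
        ultimately show "x' \<in> (\<lambda>k. k \<oplus> x) ` K" by blast
      qed
      show "(\<lambda>k. k \<oplus> x) ` K \<subseteq> {x' \<in> T. h x' = h x}"
      proof
        fix y assume "y \<in> (\<lambda>k. k \<oplus> x) ` K"
        then obtain k where k: "k \<in> K" "y = k \<oplus> x" by auto
        have kc: "k \<in> carrier R" and kw: "k \<otimes> w = \<zero>" using k unfolding K_def by auto
        have "y \<in> T"
        proof (cases "T = carrier R")
          case True then show ?thesis using k kc xc by simp
        next
          case False then have "T = PIdl z" using T by simp
          then show ?thesis using m.a_closed[of k x] Km k x by auto
        qed
        moreover have "h y = h x"
        proof -
          have "h y = k \<otimes> w \<oplus> x \<otimes> w" unfolding h_def k(2) using kc xc wc by algebra
          then show ?thesis unfolding kw h_def using xc wc by simp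
        qed
        ultimately show "y \<in> {x' \<in> T. h x' = h x}" by simp
      qed
    qed
  qed
  have cardfib: "card {x' \<in> T. h x' = h x} = card K"
    if T: "T = carrier R \<or> T = PIdl z" and x: "x \<in> T" for T x
  proof -
    have xc: "x \<in> carrier R" using x T m_sub by auto
    have "inj_on (\<lambda>k. k \<oplus> x) K"
      by (rule inj_onI) (use xc in \<open>auto simp: K_def\<close>)
    then show ?thesis using fib[OF T x] card_image by metis
  qed
  have img1: "h ` carrier R = PIdl w" unfolding h_def cgenideal_def by auto
  have img2: "h ` (PIdl z) = PIdl (z [^] Suc i)"
  proof
    show "h ` (PIdl z) \<subseteq> PIdl (z [^] Suc i)"
    proof
      fix y assume "y \<in> h ` (PIdl z)"
      then obtain a where a: "a \<in> carrier R" "y = (a \<otimes> z) \<otimes> w" unfolding h_def cgenideal_def by auto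
      have "y = a \<otimes> (w \<otimes> z)" using a zc wc by algebra
      then have "y = a \<otimes> z [^] Suc i" unfolding w_def by simp
      then show "y \<in> PIdl (z [^] Suc i)" using a unfolding cgenideal_def by auto
    qed
    show "PIdl (z [^] Suc i) \<subseteq> h ` (PIdl z)"
    proof
      fix y assume "y \<in> PIdl (z [^] Suc i)"
      then obtain a where a: "a \<in> carrier R" "y = a \<otimes> z [^] Suc i" unfolding cgenideal_def by auto
      have "y = a \<otimes> (w \<otimes> z)" using a unfolding w_def by simp
      also have "\<dots> = (a \<otimes> z) \<otimes> w" using a zc wc by algebra
      finally have "y = h (a \<otimes> z)" unfolding h_def .
      moreover have "a \<otimes> z \<in> PIdl z" using a unfolding cgenideal_def by auto
      ultimately show "y \<in> h ` (PIdl z)" by blast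
    qed
  qed
  have c1: "card (carrier R) = card (PIdl w) * card K"
    using card_fibers[OF fin, of h "card K"] cardfib[of "carrier R"] img1 by auto
  have c2: "card (PIdl z) = card (PIdl (z [^] Suc i)) * card K"
    using card_fibers[OF finite_subset[OF m_sub fin], of h "card K"] cardfib[of "PIdl z"] img2 by auto
  have "card (PIdl w) * card K = qq * card (PIdl (z [^] Suc i)) * card K"
    using c1 c2 q_mult by (metis mult.assoc)
  then show ?thesis using cK unfolding w_def by simp
qed

lemma PIdl_zero: "PIdl \<zero> = {\<zero>}" unfolding cgenideal_def by (auto intro!: exI[where x="\<zero>"])

lemma PIdl_one: "PIdl \<one> = carrier R" unfolding cgenideal_def by auto (metis r_one)

lemma card_powers: "j \<le> rr \<Longrightarrow> card (PIdl (z [^] (rr - j))) = qq ^ j"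
proof (induction j)
  case 0 then show ?case using rr_props(2) PIdl_zero by simp
next
  case (Suc j)
  have i: "rr - Suc j < rr" and e: "Suc (rr - Suc j) = rr - j" using Suc.prems by auto
  show ?case using step_card[OF i] e Suc by simp
qed

lemma card_R: "card (carrier R) = qq ^ rr"
  using card_powers[of rr] PIdl_one by simp

lemma card_m: "card (PIdl z) = qq ^ (rr - 1)"
proof -
  have "card (PIdl (z [^] (rr - (rr - 1)))) = qq ^ (rr - 1)" by (rule card_powers) simp
  moreover have "rr - (rr - 1) = 1" using rr_props(1) by simp
  ultimately show ?thesis using zc by simp
qed

lemma two_not_in_m:
  assumes oq: "odd qq" shows "\<one> \<oplus> \<one> \<notin> PIdl z"
proof
  assume e: "\<one> \<oplus> \<one> \<in> PIdl z"
  define Q where "Q = a_rcosets (PIdl z)"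
  define \<sigma> where "\<sigma> = (\<lambda>C. (\<lambda>y. y \<oplus> \<one>) ` C)"
  have rep: "\<And>C. C \<in> Q \<Longrightarrow> \<exists>x\<in>carrier R. C = PIdl z +> x"
    unfolding Q_def A_RCOSETS_def' by auto
  have shift: "\<sigma> (PIdl z +> x) = PIdl z +> (x \<oplus> \<one>)" if x: "x \<in> carrier R" for x
  proof -
    have "\<sigma> (PIdl z +> x) = (\<lambda>h. h \<oplus> x \<oplus> \<one>) ` (PIdl z)" unfolding \<sigma>_def a_r_coset_def' by auto
    also have "\<dots> = (\<lambda>h. h \<oplus> (x \<oplus> \<one>)) ` (PIdl z)"
      by (rule image_cong) (use x m_sub in \<open>auto simp: a_assoc\<close>)
    also have "\<dots> = PIdl z +> (x \<oplus> \<one>)" unfolding a_r_coset_def' by auto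
    finally show ?thesis .
  qed
  have inv: "\<sigma> C \<in> Q \<and> \<sigma> (\<sigma> C) = C \<and> \<sigma> C \<noteq> C" if CQ: "C \<in> Q" for C
  proof -
    obtain x where x: "x \<in> carrier R" and C: "C = PIdl z +> x" using rep[OF CQ] by blast
    have x1: "x \<oplus> \<one> \<in> carrier R" using x by simp
    have s1: "\<sigma> C = PIdl z +> (x \<oplus> \<one>)" using shift[OF x] C by simp
    have "\<sigma> C \<in> Q" unfolding s1 Q_def by (rule a_rcosetsI[OF m_sub x1])
    moreover have "\<sigma> (\<sigma> C) = C"
    proof -
      have "\<sigma> (\<sigma> C) = PIdl z +> (x \<oplus> \<one> \<oplus> \<one>)" using s1 shift[OF x1] by simp
      also have "\<dots> = PIdl z +> x"
      proof -
        have "x \<oplus> \<one> \<oplus> \<one> = (\<one> \<oplus> \<one>) \<oplus> x" using x by algebra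
        then have "x \<oplus> \<one> \<oplus> \<one> \<in> PIdl z +> x" using e unfolding a_r_coset_def' by blast
        then show ?thesis using a_repr_independence[OF _ x m.a_subgroup] by metis
      qed
      finally show ?thesis using C by simp
    qed
    moreover have "\<sigma> C \<noteq> C"
    proof
      assume h: "\<sigma> C = C"
      have "x \<oplus> \<one> \<in> PIdl z +> (x \<oplus> \<one>)"
      proof -
        have "x \<oplus> \<one> = \<zero> \<oplus> (x \<oplus> \<one>)" using x1 by simp
        then show ?thesis using zero_in_m unfolding a_r_coset_def' by blast
      qed
      then have "x \<oplus> \<one> \<in> PIdl z +> x" using h s1 C by simp
      then obtain hh where hh: "hh \<in> PIdl z" "x \<oplus> \<one> = hh \<oplus> x" unfolding a_r_coset_def' by blast
      have hc: "hh \<in> carrier R" using hh m_sub by auto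
      have "hh = (hh \<oplus> x) \<ominus> x" using hc x by algebra
      also have "\<dots> = (x \<oplus> \<one>) \<ominus> x" using hh by simp
      also have "\<dots> = \<one>" using x by algebra
      finally show False using hh one_notin_m by simp
    qed
    ultimately show ?thesis by blast
  qed
  have finQ: "finite Q"
    using rcosets_subset_PowG[OF ideal.axioms(1)[OF m_ideal]] fin unfolding Q_def
    by (meson finite_Pow_iff finite_subset)
  have "even (card Q)" using invol_even[OF finQ inv] by blast
  then show False using oq unfolding qq_def Q_def by simp
qed

lemma two_unit: "odd qq \<Longrightarrow> \<one> \<oplus> \<one> \<in> Units R"
  using two_not_in_m unit_iff by simp

lemma sq_eq:
  assumes two: "\<one> \<oplus> \<one> \<in> Units R" and u: "u \<in> Units R" and v: "v \<in> Units R"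
    and e: "u \<otimes> u = v \<otimes> v"
  shows "v = u \<or> v = \<ominus> u"
proof -
  have uc: "u \<in> carrier R" and vc: "v \<in> carrier R" using u v by auto
  have p: "(u \<ominus> v) \<otimes> (u \<oplus> v) = \<zero>"
  proof -
    have "(u \<ominus> v) \<otimes> (u \<oplus> v) = u \<otimes> u \<ominus> v \<otimes> v" using uc vc by algebra
    also have "\<dots> = \<zero>" unfolding e using vc by algebra
    finally show ?thesis .
  qed
  have dc: "u \<ominus> v \<in> carrier R" and sc: "u \<oplus> v \<in> carrier R" using uc vc by auto
  show ?thesis
  proof (cases "u \<ominus> v \<in> Units R")
    case True
    have "u \<oplus> v = inv (u \<ominus> v) \<otimes> ((u \<ominus> v) \<otimes> (u \<oplus> v))"
      using True sc by (metis Units_closed Units_inv_closed Units_l_inv l_one m_assoc)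
    then have s0: "u \<oplus> v = \<zero>" using p True by simp
    have "v = (u \<oplus> v) \<ominus> u" using uc vc by algebra
    also have "\<dots> = \<ominus> u" unfolding s0 using uc by algebra
    finally show ?thesis by simp
  next
    case False
    then have dm: "u \<ominus> v \<in> PIdl z" using nonunit_in_m dc by blast
    have "u \<oplus> v \<notin> PIdl z"
    proof
      assume sm: "u \<oplus> v \<in> PIdl z"
      have "(u \<ominus> v) \<oplus> (u \<oplus> v) \<in> PIdl z" using m.a_closed[OF dm sm] .
      moreover have "(u \<ominus> v) \<oplus> (u \<oplus> v) = (\<one> \<oplus> \<one>) \<otimes> u" using uc vc by algebra
      moreover have "(\<one> \<oplus> \<one>) \<otimes> u \<in> Units R" using two u by simp
      ultimately show False by (metis m_nonunit)
    qed
    then have su: "u \<oplus> v \<in> Units R" using unit_iff sc by blast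
    have "u \<ominus> v = ((u \<ominus> v) \<otimes> (u \<oplus> v)) \<otimes> inv (u \<oplus> v)"
      using su dc by (metis Units_closed Units_inv_closed Units_r_inv r_one m_assoc)
    then have d0: "u \<ominus> v = \<zero>" using p su by simp
    have "v = u \<ominus> (u \<ominus> v)" using uc vc by algebra
    also have "\<dots> = u" unfolding d0 using uc by algebra
    finally show ?thesis by simp
  qed
qed

definition TT where "TT s p = (s \<ominus> fst p) \<otimes> (s \<ominus> fst p) \<oplus> snd p \<otimes> snd p"

lemma TT_closed: "s \<in> carrier R \<Longrightarrow> fst p \<in> carrier R \<Longrightarrow> snd p \<in> carrier R \<Longrightarrow> TT s p \<in> carrier R"
  unfolding TT_def by simp

lemma unit_case_unique:
  assumes two: "\<one> \<oplus> \<one> \<in> Units R"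
    and b: "b \<in> carrier R" and c: "c \<in> carrier R" and b': "b' \<in> carrier R" and c': "c' \<in> carrier R"
    and u: "b' \<ominus> b \<in> Units R"
    and s1: "s1 \<in> carrier R" and s2: "s2 \<in> carrier R"
    and e1: "TT s1 (b, c) = TT s1 (b', c')" and e2: "TT s2 (b, c) = TT s2 (b', c')"
  shows "s1 = s2"
proof -
  define f where "f = (\<lambda>s. (s \<ominus> b) \<otimes> (s \<ominus> b) \<ominus> (s \<ominus> b') \<otimes> (s \<ominus> b'))"
  have fval: "f s = c' \<otimes> c' \<ominus> c \<otimes> c" if s: "s \<in> carrier R" and e: "TT s (b, c) = TT s (b', c')" for s
  proof -
    have xc: "(s \<ominus> b) \<otimes> (s \<ominus> b) \<in> carrier R" "(s \<ominus> b') \<otimes> (s \<ominus> b') \<in> carrier R"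
      "c \<otimes> c \<in> carrier R" "c' \<otimes> c' \<in> carrier R" using s b b' c c' by auto
    have "f s = (TT s (b, c) \<ominus> TT s (b', c')) \<oplus> (c' \<otimes> c' \<ominus> c \<otimes> c)"
      unfolding f_def TT_def fst_conv snd_conv by (rule link[OF xc])
    also have "TT s (b, c) \<ominus> TT s (b', c') = \<zero>"
      unfolding e using TT_closed[of s "(b',c')"] s b' c' by simp
    finally show ?thesis using xc by simp
  qed
  have "((\<one> \<oplus> \<one>) \<otimes> (b' \<ominus> b)) \<otimes> (s1 \<ominus> s2) = f s1 \<ominus> f s2"
    unfolding f_def by (rule iden4[OF b b' s1 s2, symmetric])
  also have "\<dots> = \<zero>" unfolding fval[OF s1 e1] fval[OF s2 e2] using c c' by simp
  finally have p0: "((\<one> \<oplus> \<one>) \<otimes> (b' \<ominus> b)) \<otimes> (s1 \<ominus> s2) = \<zero>" .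
  define uu where "uu = (\<one> \<oplus> \<one>) \<otimes> (b' \<ominus> b)"
  have uu: "uu \<in> Units R" unfolding uu_def using two u by simp
  have p: "uu \<otimes> (s1 \<ominus> s2) = \<zero>" using p0 unfolding uu_def .
  have dc: "s1 \<ominus> s2 \<in> carrier R" using s1 s2 by simp
  have "s1 \<ominus> s2 = inv uu \<otimes> (uu \<otimes> (s1 \<ominus> s2))"
    using uu dc by (metis Units_closed Units_inv_closed Units_l_inv l_one m_assoc)
  then have d0: "s1 \<ominus> s2 = \<zero>" using p uu by simp
  have "s1 = s2 \<oplus> (s1 \<ominus> s2)" using s1 s2 by algebra
  then show ?thesis unfolding d0 using s2 by simp
qed

definition Au where "Au A = A \<inter> Units R"
definition WW where "WW A = A \<times> Au A"
definition NN where "NN A st = card {p \<in> WW A. TT (fst st) p = snd st}"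

lemma WW_sub: "WW A \<subseteq> A \<times> A" unfolding WW_def Au_def by auto

lemma C1:
  assumes AC: "A \<subseteq> carrier R"
  shows "card A * card (WW A) \<le> (\<Sum>st \<in> ring_sumset R A A \<times> ring_sumset R (ring_squares R A) (ring_squares R A). NN A st)"
proof -
  define S where "S = ring_sumset R A A"
  define D where "D = ring_sumset R (ring_squares R A) (ring_squares R A)"
  define F where "F = (\<lambda>st. {p \<in> WW A. TT (fst st) p = snd st})"
  have finA: "finite A" using finite_subset[OF AC fin] .
  have WA: "WW A \<subseteq> A \<times> A" by (rule WW_sub)
  have finW: "finite (WW A)" using finite_subset[OF WA] finA by auto
  have SC: "S \<subseteq> carrier R" unfolding S_def ring_sumset_def using AC by auto
  have DC: "D \<subseteq> carrier R" unfolding D_def ring_sumset_def ring_squares_def using AC by auto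
  have finS: "finite S" using finite_subset[OF SC fin] .
  have finD: "finite D" using finite_subset[OF DC fin] .
  have sig: "(\<Sum>st\<in>S \<times> D. NN A st) = card (Sigma (S \<times> D) F)"
    unfolding NN_def F_def using finS finD finW by (subst card_SigmaI) auto
  define f where "f = (\<lambda>ap :: 'a \<times> ('a \<times> 'a). ((fst ap \<oplus> fst (snd ap), fst ap \<otimes> fst ap \<oplus> snd (snd ap) \<otimes> snd (snd ap)), snd ap))"
  have inj: "inj_on f (A \<times> WW A)"
  proof (rule inj_onI)
    fix x y assume x: "x \<in> A \<times> WW A" and y: "y \<in> A \<times> WW A" and e: "f x = f y"
    have pp: "snd x = snd y" using e unfolding f_def by simp
    have s: "fst x \<oplus> fst (snd x) = fst y \<oplus> fst (snd x)" using e pp unfolding f_def by simp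
    have c: "fst x \<in> carrier R" "fst y \<in> carrier R" "fst (snd x) \<in> carrier R"
    proof -
      have "snd x \<in> A \<times> A" using x WA by (auto simp: mem_Times_iff)
      then show "fst x \<in> carrier R" "fst y \<in> carrier R" "fst (snd x) \<in> carrier R"
        using x y AC by (auto simp: mem_Times_iff)
    qed
    have "fst x = (fst x \<oplus> fst (snd x)) \<ominus> fst (snd x)" using c by algebra
    also have "\<dots> = (fst y \<oplus> fst (snd x)) \<ominus> fst (snd x)" using s by simp
    also have "\<dots> = fst y" using c by algebra
    finally show "x = y" using pp by (simp add: prod_eq_iff)
  qed
  have img: "f ` (A \<times> WW A) \<subseteq> Sigma (S \<times> D) F"
  proof
    fix y assume "y \<in> f ` (A \<times> WW A)"
    then obtain a p where a: "a \<in> A" and p: "p \<in> WW A" and y: "y = f (a, p)" by auto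
    have b: "fst p \<in> A" and c: "snd p \<in> A" using p WA by (auto simp: mem_Times_iff)
    have ac: "a \<in> carrier R" "fst p \<in> carrier R" "snd p \<in> carrier R" using a b c AC by auto
    have "a \<oplus> fst p \<in> S" unfolding S_def ring_sumset_def using a b by blast
    moreover have "a \<otimes> a \<oplus> snd p \<otimes> snd p \<in> D"
      unfolding D_def ring_sumset_def ring_squares_def using a c by blast
    moreover have "TT (a \<oplus> fst p) p = a \<otimes> a \<oplus> snd p \<otimes> snd p"
    proof -
      have "a \<oplus> fst p \<ominus> fst p = a" using ac by algebra
      then show ?thesis unfolding TT_def by simp
    qed
    ultimately show "y \<in> Sigma (S \<times> D) F" unfolding y f_def F_def using p by simp
  qed
  have "card (A \<times> WW A) \<le> card (Sigma (S \<times> D) F)"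
    by (rule card_inj_on_le[OF inj img]) (use finS finD finW in \<open>auto intro!: finite_SigmaI simp: F_def\<close>)
  then show ?thesis using sig unfolding S_def D_def by (simp add: card_cartesian_product)
qed

lemma C2:
  assumes AC: "A \<subseteq> carrier R"
  shows "(\<Sum>st \<in> carrier R \<times> carrier R. NN A st) = card (WW A) * card (carrier R)"
proof -
  define F where "F = (\<lambda>st. {p \<in> WW A. TT (fst st) p = snd st})"
  have finA: "finite A" using finite_subset[OF AC fin] .
  have WA: "WW A \<subseteq> A \<times> A" by (rule WW_sub)
  have finW: "finite (WW A)" using finite_subset[OF WA] finA by auto
  have WC: "WW A \<subseteq> carrier R \<times> carrier R" using WA AC by auto
  have sig: "(\<Sum>st\<in>carrier R \<times> carrier R. NN A st) = card (Sigma (carrier R \<times> carrier R) F)"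
    unfolding NN_def F_def using fin finW by (subst card_SigmaI) auto
  define g where "g = (\<lambda>ps :: ('a \<times> 'a) \<times> 'a. ((snd ps, TT (snd ps) (fst ps)), fst ps))"
  have inj: "inj_on g (WW A \<times> carrier R)" by (rule inj_onI) (auto simp: g_def prod_eq_iff)
  have img: "g ` (WW A \<times> carrier R) = Sigma (carrier R \<times> carrier R) F"
  proof
    show "g ` (WW A \<times> carrier R) \<subseteq> Sigma (carrier R \<times> carrier R) F"
    proof
      fix y assume "y \<in> g ` (WW A \<times> carrier R)"
      then obtain p s where p: "p \<in> WW A" and s: "s \<in> carrier R" and y: "y = g (p, s)" by auto
      have "fst p \<in> carrier R" "snd p \<in> carrier R" using p WC by (auto simp: mem_Times_iff)
      then have "TT s p \<in> carrier R" using TT_closed s by simp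
      then show "y \<in> Sigma (carrier R \<times> carrier R) F" unfolding y g_def F_def using p s by simp
    qed
    show "Sigma (carrier R \<times> carrier R) F \<subseteq> g ` (WW A \<times> carrier R)"
    proof
      fix y assume y: "y \<in> Sigma (carrier R \<times> carrier R) F"
      then obtain s t p where st: "y = ((s,t),p)" "s \<in> carrier R" "p \<in> WW A" "TT s p = t"
        unfolding F_def by auto
      then have "y = g (p, s)" unfolding g_def by simp
      then show "y \<in> g ` (WW A \<times> carrier R)" using st by auto
    qed
  qed
  show ?thesis using sig card_image[OF inj] img by (simp add: card_cartesian_product)
qed

lemma add_cancel_left:
  assumes "x \<in> carrier R" "y \<in> carrier R" "y' \<in> carrier R" "x \<oplus> y = x \<oplus> y'"
  shows "y = y'"
proof -
  have "y = (x \<oplus> y) \<ominus> x" using assms(1,2) by algebra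
  also have "\<dots> = (x \<oplus> y') \<ominus> x" by (simp only: assms(4))
  also have "\<dots> = y'" using assms(1,3) by algebra
  finally show ?thesis .
qed

lemma C3_row:
  assumes AC: "A \<subseteq> carrier R" and two: "\<one> \<oplus> \<one> \<in> Units R" and p: "p \<in> WW A"
  shows "(\<Sum>p'\<in>WW A. card {s \<in> carrier R. TT s p = TT s p'})
         \<le> card (WW A) + 2 * card (PIdl z) * card (carrier R)"
proof -
  obtain b c where pbc: "p = (b, c)" by (cases p)
  have finA: "finite A" using finite_subset[OF AC fin] .
  have WA: "WW A \<subseteq> A \<times> A" by (rule WW_sub)
  have finW: "finite (WW A)" using finite_subset[OF WA] finA by auto
  have WU: "\<And>q. q \<in> WW A \<Longrightarrow> fst q \<in> carrier R \<and> snd q \<in> Units R \<and> snd q \<in> carrier R"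
    unfolding WW_def Au_def using AC by auto
  have bc: "b \<in> carrier R" "c \<in> carrier R" using WU[OF p] unfolding pbc by auto
  define W1 where "W1 = {p' \<in> WW A. fst p' \<ominus> b \<in> Units R}"
  define W2 where "W2 = {p' \<in> WW A. fst p' \<ominus> b \<notin> Units R}"
  define f where "f = (\<lambda>p'. card {s \<in> carrier R. TT s p = TT s p'})"
  have fin1: "finite W1" "finite W2" unfolding W1_def W2_def using finW by auto
  have split: "(\<Sum>p'\<in>WW A. f p') = (\<Sum>p'\<in>W1. f p') + (\<Sum>p'\<in>W2. f p')"
  proof -
    have "WW A = W1 \<union> W2" "W1 \<inter> W2 = {}" unfolding W1_def W2_def by auto
    then show ?thesis using sum.union_disjoint[OF fin1] by simp
  qed
  have b1: "(\<Sum>p'\<in>W1. f p') \<le> card (WW A)"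
  proof -
    have "(\<Sum>p'\<in>W1. f p') \<le> (\<Sum>p'\<in>W1. 1)"
    proof (rule sum_mono)
      fix p' assume p': "p' \<in> W1"
      obtain b' c' where p'e: "p' = (b', c')" by (cases p')
      have bc': "b' \<in> carrier R" "c' \<in> carrier R" "b' \<ominus> b \<in> Units R"
        using p' WU unfolding W1_def p'e by auto
      have all: "\<forall>s1\<in>{s \<in> carrier R. TT s p = TT s p'}. \<forall>s2\<in>{s \<in> carrier R. TT s p = TT s p'}. s1 = s2"
      proof (intro ballI)
        fix s1 s2 assume s1: "s1 \<in> {s \<in> carrier R. TT s p = TT s p'}" and s2: "s2 \<in> {s \<in> carrier R. TT s p = TT s p'}"
        have s1c: "s1 \<in> carrier R" and e1: "TT s1 (b, c) = TT s1 (b', c')" using s1 unfolding pbc p'e by auto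
        have s2c: "s2 \<in> carrier R" and e2: "TT s2 (b, c) = TT s2 (b', c')" using s2 unfolding pbc p'e by auto
        show "s1 = s2" by (rule unit_case_unique[OF two bc(1) bc(2) bc'(1) bc'(2) bc'(3) s1c s2c e1 e2])
      qed
      have fS: "finite {s \<in> carrier R. TT s p = TT s p'}" using fin by simp
      have "card {s \<in> carrier R. TT s p = TT s p'} \<le> Suc 0"
        unfolding card_le_Suc0_iff_eq[OF fS] by (rule all)
      then show "f p' \<le> 1" unfolding f_def by simp
    qed
    also have "\<dots> = card W1" by simp
    also have "\<dots> \<le> card (WW A)" by (rule card_mono[OF finW]) (auto simp: W1_def)
    finally show ?thesis .
  qed
  have b2: "(\<Sum>p'\<in>W2. f p') \<le> 2 * card (PIdl z) * card (carrier R)"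
  proof -
    define Sg where "Sg = Sigma W2 (\<lambda>p'. {s \<in> carrier R. TT s p = TT s p'})"
    have sg: "(\<Sum>p'\<in>W2. f p') = card Sg"
      unfolding Sg_def f_def using fin1 fin by (subst card_SigmaI) auto
    have finSg: "finite Sg" unfolding Sg_def using fin1 fin by (auto intro!: finite_SigmaI)
    define \<phi> where "\<phi> = (\<lambda>x :: ('a \<times> 'a) \<times> 'a. (fst (fst x) \<ominus> b, snd x))"
    have img: "\<phi> ` Sg \<subseteq> (PIdl z) \<times> carrier R"
    proof
      fix y assume "y \<in> \<phi> ` Sg"
      then obtain x where x: "x \<in> Sg" "y = \<phi> x" by auto
      have "fst x \<in> W2" "snd x \<in> carrier R" using x unfolding Sg_def by auto
      then have "fst (fst x) \<ominus> b \<in> carrier R" "fst (fst x) \<ominus> b \<notin> Units R"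
        using WU bc unfolding W2_def by auto
      then have "fst (fst x) \<ominus> b \<in> PIdl z" using nonunit_in_m by blast
      then show "y \<in> (PIdl z) \<times> carrier R" using x \<open>snd x \<in> carrier R\<close> unfolding \<phi>_def by simp
    qed
    have fib: "card {x \<in> Sg. \<phi> x = y} \<le> 2" if y: "y \<in> \<phi> ` Sg" for y
    proof -
      obtain x0 where x0: "x0 \<in> Sg" "y = \<phi> x0" using y by auto
      obtain b0 c0 s0 where x0e: "x0 = ((b0, c0), s0)" by (metis prod.exhaust)
      have h0: "(b0, c0) \<in> WW A" "s0 \<in> carrier R" "TT s0 p = TT s0 (b0, c0)"
        using x0 unfolding Sg_def W2_def x0e by auto
      have u0: "b0 \<in> carrier R" "c0 \<in> Units R" using WU[OF h0(1)] by auto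
      have "{x \<in> Sg. \<phi> x = y} \<subseteq> {x0, ((b0, \<ominus> c0), s0)}"
      proof
        fix x assume x: "x \<in> {x \<in> Sg. \<phi> x = y}"
        obtain b1 c1 s1 where xe: "x = ((b1, c1), s1)" by (metis prod.exhaust)
        have h1: "(b1, c1) \<in> WW A" "s1 \<in> carrier R" "TT s1 p = TT s1 (b1, c1)"
          using x unfolding Sg_def W2_def xe by auto
        have u1: "b1 \<in> carrier R" "c1 \<in> Units R" using WU[OF h1(1)] by auto
        have ph: "b1 \<ominus> b = b0 \<ominus> b" "s1 = s0" using x x0(2) unfolding xe x0e \<phi>_def by auto
        have bb: "b1 = b0"
        proof -
          have "b1 = (b1 \<ominus> b) \<oplus> b" using u1 bc by algebra
          also have "\<dots> = (b0 \<ominus> b) \<oplus> b" using ph by simp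
          also have "\<dots> = b0" using u0 bc by algebra
          finally show ?thesis .
        qed
        have "TT s0 (b0, c0) = TT s0 (b0, c1)" using h0(3) h1(3) ph(2) bb by simp
        then have "(s0 \<ominus> b0) \<otimes> (s0 \<ominus> b0) \<oplus> c0 \<otimes> c0 = (s0 \<ominus> b0) \<otimes> (s0 \<ominus> b0) \<oplus> c1 \<otimes> c1"
          unfolding TT_def by simp
        then have "c0 \<otimes> c0 = c1 \<otimes> c1"
          by (rule add_cancel_left[rotated 3]) (use u0 u1 h0(2) in auto)
        then have "c1 = c0 \<or> c1 = \<ominus> c0" using sq_eq[OF two u0(2) u1(2)] by simp
        then show "x \<in> {x0, ((b0, \<ominus> c0), s0)}" unfolding xe x0e using bb ph(2) by auto
      qed
      then have "card {x \<in> Sg. \<phi> x = y} \<le> card {x0, ((b0, \<ominus> c0), s0)}"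
        by (rule card_mono[rotated]) simp
      also have "\<dots> \<le> 2" by (rule card_le_2)
      finally show ?thesis .
    qed
    have "card Sg \<le> 2 * card (\<phi> ` Sg)" by (rule card_fibers_le[OF finSg fib])
    also have "card (\<phi> ` Sg) \<le> card ((PIdl z) \<times> carrier R)"
      by (rule card_mono[OF _ img]) (use finite_subset[OF m_sub fin] fin in simp)
    also have "card ((PIdl z) \<times> carrier R) = card (PIdl z) * card (carrier R)"
      by (rule card_cartesian_product)
    finally show ?thesis using sg by simp
  qed
  show ?thesis using split b1 b2 unfolding f_def by simp
qed

lemma C3:
  assumes AC: "A \<subseteq> carrier R" and two: "\<one> \<oplus> \<one> \<in> Units R"
  shows "(\<Sum>st \<in> carrier R \<times> carrier R. (NN A st * NN A st))
        \<le> card (WW A) * (card (WW A) + 2 * card (PIdl z) * card (carrier R))"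
proof -
  define CC where "CC = carrier R \<times> carrier R"
  define cond where "cond = (\<lambda>st pp::('a \<times> 'a) \<times> ('a \<times> 'a). TT (fst st) (fst pp) = snd st \<and> TT (fst st) (snd pp) = snd st)"
  have finA: "finite A" using finite_subset[OF AC fin] .
  have WA: "WW A \<subseteq> A \<times> A" by (rule WW_sub)
  have finW: "finite (WW A)" using finite_subset[OF WA] finA by auto
  have finCC: "finite CC" unfolding CC_def using fin by simp
  have finWW: "finite (WW A \<times> WW A)" using finW by simp
  have WU: "\<And>q. q \<in> WW A \<Longrightarrow> fst q \<in> carrier R \<and> snd q \<in> carrier R"
    unfolding WW_def Au_def using AC by auto
  have e1: "(NN A st * NN A st) = (\<Sum>pp\<in>WW A \<times> WW A. if cond st pp then 1 else 0)" for st
  proof -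
    have "{p \<in> WW A. TT (fst st) p = snd st} \<times> {p \<in> WW A. TT (fst st) p = snd st}
          = {pp \<in> WW A \<times> WW A. cond st pp}"
    proof (intro equalityI subsetI)
      fix pp assume "pp \<in> {p \<in> WW A. TT (fst st) p = snd st} \<times> {p \<in> WW A. TT (fst st) p = snd st}"
      then show "pp \<in> {pp \<in> WW A \<times> WW A. cond st pp}" unfolding cond_def by (cases pp) simp
    next
      fix pp assume "pp \<in> {pp \<in> WW A \<times> WW A. cond st pp}"
      then show "pp \<in> {p \<in> WW A. TT (fst st) p = snd st} \<times> {p \<in> WW A. TT (fst st) p = snd st}"
        unfolding cond_def by (cases pp) simp
    qed
    moreover have "(NN A st * NN A st) = card ({p \<in> WW A. TT (fst st) p = snd st} \<times> {p \<in> WW A. TT (fst st) p = snd st})"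
      by (simp add: NN_def card_cartesian_product)
    ultimately have "(NN A st * NN A st) = card {pp \<in> WW A \<times> WW A. cond st pp}" by simp
    also have "\<dots> = (\<Sum>pp\<in>{pp \<in> WW A \<times> WW A. cond st pp}. 1)" by simp
    also have "\<dots> = (\<Sum>pp\<in>WW A \<times> WW A. if cond st pp then 1 else 0)"
      by (rule sum.inter_filter[OF finWW])
    finally show ?thesis .
  qed
  have e2: "(\<Sum>st\<in>CC. if cond st pp then 1 else 0) = card {s \<in> carrier R. TT s (fst pp) = TT s (snd pp)}"
    if pp: "pp \<in> WW A \<times> WW A" for pp
  proof -
    have "(\<Sum>st\<in>CC. if cond st pp then 1 else 0) = (\<Sum>st\<in>{st \<in> CC. cond st pp}. 1)"
      by (rule sum.inter_filter[OF finCC, symmetric])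
    also have "\<dots> = card {st \<in> CC. cond st pp}" by simp
    also have "{st \<in> CC. cond st pp} = (\<lambda>s. (s, TT s (fst pp))) ` {s \<in> carrier R. TT s (fst pp) = TT s (snd pp)}"
    proof
      show "{st \<in> CC. cond st pp} \<subseteq> (\<lambda>s. (s, TT s (fst pp))) ` {s \<in> carrier R. TT s (fst pp) = TT s (snd pp)}"
      proof
        fix st assume st: "st \<in> {st \<in> CC. cond st pp}"
        then have "st = (fst st, TT (fst st) (fst pp))" "fst st \<in> carrier R"
          "TT (fst st) (fst pp) = TT (fst st) (snd pp)"
          unfolding cond_def CC_def by (auto simp: prod_eq_iff)
        then show "st \<in> (\<lambda>s. (s, TT s (fst pp))) ` {s \<in> carrier R. TT s (fst pp) = TT s (snd pp)}"
          by blast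
      qed
      show "(\<lambda>s. (s, TT s (fst pp))) ` {s \<in> carrier R. TT s (fst pp) = TT s (snd pp)} \<subseteq> {st \<in> CC. cond st pp}"
      proof
        fix st assume "st \<in> (\<lambda>s. (s, TT s (fst pp))) ` {s \<in> carrier R. TT s (fst pp) = TT s (snd pp)}"
        then obtain s where s: "s \<in> carrier R" "TT s (fst pp) = TT s (snd pp)" "st = (s, TT s (fst pp))" by auto
        have "fst (fst pp) \<in> carrier R" "snd (fst pp) \<in> carrier R" using WU pp by auto
        then have "TT s (fst pp) \<in> carrier R" using TT_closed s(1) by simp
        then show "st \<in> {st \<in> CC. cond st pp}" using s unfolding CC_def cond_def by simp
      qed
    qed
    also have "card ((\<lambda>s. (s, TT s (fst pp))) ` {s \<in> carrier R. TT s (fst pp) = TT s (snd pp)})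
             = card {s \<in> carrier R. TT s (fst pp) = TT s (snd pp)}"
      by (rule card_image) (auto simp: inj_on_def)
    finally show ?thesis .
  qed
  have "(\<Sum>st\<in>CC. (NN A st * NN A st)) = (\<Sum>st\<in>CC. \<Sum>pp\<in>WW A \<times> WW A. if cond st pp then 1 else 0)"
    using e1 by simp
  also have "\<dots> = (\<Sum>pp\<in>WW A \<times> WW A. \<Sum>st\<in>CC. if cond st pp then 1 else 0)"
    by (rule sum.swap)
  also have "\<dots> = (\<Sum>pp\<in>WW A \<times> WW A. card {s \<in> carrier R. TT s (fst pp) = TT s (snd pp)})"
    by (rule sum.cong) (use e2 in auto)
  also have "\<dots> = (\<Sum>p\<in>WW A. \<Sum>p'\<in>WW A. card {s \<in> carrier R. TT s p = TT s p'})"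
    by (simp add: sum.cartesian_product split_def)
  also have "\<dots> \<le> (\<Sum>p\<in>WW A. card (WW A) + 2 * card (PIdl z) * card (carrier R))"
    by (rule sum_mono) (rule C3_row[OF AC two])
  also have "\<dots> = card (WW A) * (card (WW A) + 2 * card (PIdl z) * card (carrier R))" by simp
  finally show ?thesis unfolding CC_def .
qed

lemma key:
  assumes AC: "A \<subseteq> carrier R" and oq: "odd qq"
    and big: "real (card A) \<ge> 2 * real qq ^ (rr - 1)"
  defines "M \<equiv> real (max (card (ring_sumset R A A)) (card (ring_sumset R (ring_squares R A) (ring_squares R A))))"
  shows "real qq ^ rr * real (card A) \<le> 2 * M^2 \<or> real (card A)^4 \<le> 16 * real qq ^ (2*rr-1) * M^2"
proof -
  define S where "S = ring_sumset R A A"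
  define D where "D = ring_sumset R (ring_squares R A) (ring_squares R A)"
  have two: "\<one> \<oplus> \<one> \<in> Units R" using two_unit[OF oq] .
  have q0: "qq > 0" using oq by (cases qq) auto
  have r1: "rr \<ge> 1" using rr_props(1) by simp
  have a0: "real (card A) > 0"
  proof -
    have "real qq ^ (rr - 1) > 0" using q0 by simp
    then show ?thesis using big by linarith
  qed
  have finA: "finite A" using finite_subset[OF AC fin] .
  have Au_big: "real (card A) \<le> 2 * real (card (Au A))"
  proof -
    have "A \<subseteq> Au A \<union> PIdl z"
      unfolding Au_def using AC nonunit_in_m by blast
    then have "card A \<le> card (Au A \<union> PIdl z)" by (rule card_mono[rotated]) (use finA finite_subset[OF m_sub fin] in \<open>simp add: Au_def\<close>)
    also have "\<dots> \<le> card (Au A) + card (PIdl z)" by (rule card_Un_le)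
    finally have h: "card A \<le> card (Au A) + qq ^ (rr - 1)" unfolding card_m .
    then have "real (card A) \<le> real (card (Au A)) + real qq ^ (rr - 1)" by (rule cast_help)
    then show ?thesis using big by linarith
  qed
  have wdef: "card (WW A) = card A * card (Au A)" unfolding WW_def by (simp add: card_cartesian_product)
  have w_big: "real (card (WW A)) \<ge> real (card A)^2 / 2"
  proof -
    have "real (card (WW A)) = real (card A) * real (card (Au A))" unfolding wdef by simp
    then show ?thesis using wbig_help[OF _ Au_big] by simp
  qed
  have SC: "S \<subseteq> carrier R" unfolding S_def ring_sumset_def using AC by auto
  have DC: "D \<subseteq> carrier R" unfolding D_def ring_sumset_def ring_squares_def using AC by auto
  have n0: "card (carrier R) > 0" using fin zc card_gt_0_iff by blast
  have vb: "real (\<Sum>st\<in>S \<times> D. NN A st) \<le> real (card (S \<times> D)) * real (card (WW A)) / real (card (carrier R))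
      + sqrt (real (card (S \<times> D))) * sqrt (real (card (WW A)) * real (2 * card (PIdl z) * card (carrier R)))"
  proof (rule var_bound)
    show "finite (carrier R \<times> carrier R)" using fin by simp
    show "S \<times> D \<subseteq> carrier R \<times> carrier R" using SC DC by auto
    show "card (carrier R \<times> carrier R) = card (carrier R) * card (carrier R)" by (rule card_cartesian_product)
    show "card (carrier R) > 0" by (rule n0)
    show "(\<Sum>st\<in>carrier R \<times> carrier R. NN A st) = card (WW A) * card (carrier R)" by (rule C2[OF AC])
    show "(\<Sum>st\<in>carrier R \<times> carrier R. NN A st * NN A st) \<le> card (WW A) * (card (WW A) + 2 * card (PIdl z) * card (carrier R))"
      by (rule C3[OF AC two])
  qed
  have c1: "real (card A * card (WW A)) \<le> real (\<Sum>st\<in>S \<times> D. NN A st)"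
    using C1[OF AC] unfolding S_def D_def by linarith
  show ?thesis
  proof (rule alt_lemma)
    show "real (card A) * real (card (WW A)) \<le> real (card (S \<times> D)) * real (card (WW A)) / real (card (carrier R))
      + sqrt (real (card (S \<times> D))) * sqrt (real (card (WW A)) * (2 * real (card (PIdl z)) * real (card (carrier R))))"
      using vb c1 by simp
    show "real (card (S \<times> D)) \<le> M^2"
    proof -
      have "card (S \<times> D) = card S * card D" by (rule card_cartesian_product)
      also have "\<dots> \<le> max (card S) (card D) * max (card S) (card D)" by (rule mult_le_mono) auto
      finally show ?thesis unfolding M_def S_def D_def by (rule sq_help)
    qed
    show "real (card (WW A)) \<ge> real (card A)^2 / 2" by (rule w_big)
    show "real (card A) > 0" by (rule a0)
    show "real (card (carrier R)) = real qq ^ rr" unfolding card_R by simp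
    show "real (card (PIdl z)) = real qq ^ (rr - 1)" unfolding card_m by simp
    show "real qq > 0" using q0 by simp
    show "rr \<ge> 1" by (rule r1)
    show "real (card (S \<times> D)) \<ge> 0" by simp
  qed
qed

end


lemma main_instance:
  fixes R :: "nat ring" and c1 c2 C :: real
  assumes c1: "c1 > 0" and c2: "c2 > 0" and Cdef: "C = (min 1 c1)^2 / (4 * (max 1 c2)^3)"
    and fvrR: "finite_valuation_ring R" and zc: "z \<in> carrier R"
    and zmax: "maximalideal (PIdl\<^bsub>R\<^esub> z) R"
    and qd: "q = card (carrier (R Quot (PIdl\<^bsub>R\<^esub> z)))"
    and rd: "r = (LEAST n::nat. n > 0 \<and> z [^]\<^bsub>R\<^esub> n = \<zero>\<^bsub>R\<^esub>)"
    and pk: "\<exists>p k. Factorial_Ring.prime (p::nat) \<and> odd p \<and> k > 0 \<and> q = p ^ k"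
    and AC: "A \<subseteq> carrier R" and big: "real (card A) \<ge> 2 * real q ^ (r - 1)"
  shows "(let M = real (max (card (ring_sumset R A A))
                            (card (ring_sumset R (ring_squares R A) (ring_squares R A))))
          in
           (real (card A) \<ge> c1 * real q powr (real r - 1/3) \<longrightarrow>
              M \<ge> C * real q powr (real r / 2) * real (card A) powr (1/2)) \<and>
           (c1 * real q powr (real r - 3/8) \<le> real (card A) \<and>
            real (card A) \<le> c2 * real q powr (real r - 1/3) \<longrightarrow>
              M \<ge> C * real (card A) ^ 2 / real q powr ((2 * real r - 1) / 2)) \<and>
           (real (card (ring_sumset R A A)) * real (card A) ^ 2 \<ge> c1 * real q powr (3 * real r - 1) \<and>
            real (card A) \<le> c2 * real q powr (real r - 3/8) \<longrightarrow>
              M \<ge> C * real q powr (real r / 3) * real (card A) powr (2/3)))"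
proof -
  have cr: "cring R" and fin: "finite (carrier R)" and ex1: "\<exists>!M. maximalideal M R"
    using fvrR unfolding finite_valuation_ring_def by auto
  have uniq: "M = PIdl\<^bsub>R\<^esub> z" if "maximalideal M R" for M
    using ex1 zmax that by auto
  interpret F: fvr R z
    by (rule fvr.intro[OF cr fvr_axioms.intro[OF fin zc zmax uniq]])
  have qq: "q = F.qq" using qd F.qq_def' by simp
  have rr: "r = F.rr" using rd unfolding F.rr_def by simp
  have oq: "odd F.qq"
  proof -
    obtain p k where "odd p" "q = p ^ k" using pk by blast
    then show ?thesis using qq by (simp add: even_power)
  qed
  define M where "M = real (max (card (ring_sumset R A A)) (card (ring_sumset R (ring_squares R A) (ring_squares R A))))"
  have alt: "real q ^ r * real (card A) \<le> 2 * M^2 \<or> real (card A)^4 \<le> 16 * real q ^ (2*r-1) * M^2"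
    using F.key[OF AC oq] big unfolding qq rr M_def by simp
  have q0: "real q > 0" using oq qq by (cases q) auto
  have r1: "r \<ge> 1" using F.rr_props(1) rr by simp
  have a0: "real (card A) > 0"
  proof -
    have "real q ^ (r - 1) > 0" using q0 by simp
    then show ?thesis using big by linarith
  qed
  have MS: "real (card (ring_sumset R A A)) \<le> M" unfolding M_def by simp
  have M0: "M \<ge> 0" unfolding M_def by simp
  note Cf = C_facts[OF c1 c2, folded Cdef]
  show ?thesis
    unfolding Let_def M_def[symmetric]
  proof (intro conjI impI)
    assume h: "real (card A) \<ge> c1 * real q powr (real r - 1/3)"
    show "M \<ge> C * real q powr (real r / 2) * real (card A) powr (1/2)"
      by (rule P1[OF q0 r1 a0 M0 Cf(1) alt Cf(2) Cf(3) c1 h])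
  next
    assume h: "c1 * real q powr (real r - 3/8) \<le> real (card A) \<and> real (card A) \<le> c2 * real q powr (real r - 1/3)"
    show "M \<ge> C * real (card A) ^ 2 / real q powr ((2 * real r - 1) / 2)"
      by (rule P2[OF q0 r1 a0 M0 Cf(1) alt Cf(2) Cf(4) c2]) (use h in simp)
  next
    assume h: "real (card (ring_sumset R A A)) * real (card A) ^ 2 \<ge> c1 * real q powr (3 * real r - 1) \<and>
          real (card A) \<le> c2 * real q powr (real r - 3/8)"
    show "M \<ge> C * real q powr (real r / 3) * real (card A) powr (2/3)"
      by (rule P3[OF q0 r1 a0 Cf(1) MS c1 c2 Cf(5)]) (use h in simp_all)
  qed
qed

theorem corollary1p6:
  shows "\<forall>c1 c2 :: real. c1 > 0 \<longrightarrow> c2 > 0 \<longrightarrow> (\<exists>C :: real. C > 0 \<and>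
    (\<forall>(R :: nat ring) z q r A.
       finite_valuation_ring R \<and>
       z \<in> carrier R \<and> maximalideal (PIdl\<^bsub>R\<^esub> z) R \<and>
       q = card (carrier (R Quot (PIdl\<^bsub>R\<^esub> z))) \<and>
       r = (LEAST n::nat. n > 0 \<and> z [^]\<^bsub>R\<^esub> n = \<zero>\<^bsub>R\<^esub>) \<and>
       (\<exists>p k. Factorial_Ring.prime (p::nat) \<and> odd p \<and> k > 0 \<and> q = p ^ k) \<and>
       A \<subseteq> carrier R \<and> real (card A) \<ge> 2 * real q ^ (r - 1)
     \<longrightarrow>
       (let M = real (max (card (ring_sumset R A A))
                          (card (ring_sumset R (ring_squares R A) (ring_squares R A))))
        in
         (real (card A) \<ge> c1 * real q powr (real r - 1/3) \<longrightarrow>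
            M \<ge> C * real q powr (real r / 2) * real (card A) powr (1/2)) \<and>
         (c1 * real q powr (real r - 3/8) \<le> real (card A) \<and>
          real (card A) \<le> c2 * real q powr (real r - 1/3) \<longrightarrow>
            M \<ge> C * real (card A) ^ 2 / real q powr ((2 * real r - 1) / 2)) \<and>
         (real (card (ring_sumset R A A)) * real (card A) ^ 2 \<ge> c1 * real q powr (3 * real r - 1) \<and>
          real (card A) \<le> c2 * real q powr (real r - 3/8) \<longrightarrow>
            M \<ge> C * real q powr (real r / 3) * real (card A) powr (2/3)))))"
proof (intro allI impI)
  fix c1 c2 :: real
  assume c1: "c1 > 0" and c2: "c2 > 0"
  show "\<exists>C :: real. C > 0 \<and> (\<forall>(R :: nat ring) z q r A.
       finite_valuation_ring R \<and>
       z \<in> carrier R \<and> maximalideal (PIdl\<^bsub>R\<^esub> z) R \<and>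
       q = card (carrier (R Quot (PIdl\<^bsub>R\<^esub> z))) \<and>
       r = (LEAST n::nat. n > 0 \<and> z [^]\<^bsub>R\<^esub> n = \<zero>\<^bsub>R\<^esub>) \<and>
       (\<exists>p k. Factorial_Ring.prime (p::nat) \<and> odd p \<and> k > 0 \<and> q = p ^ k) \<and>
       A \<subseteq> carrier R \<and> real (card A) \<ge> 2 * real q ^ (r - 1)
     \<longrightarrow>
       (let M = real (max (card (ring_sumset R A A))
                          (card (ring_sumset R (ring_squares R A) (ring_squares R A))))
        in
         (real (card A) \<ge> c1 * real q powr (real r - 1/3) \<longrightarrow>
            M \<ge> C * real q powr (real r / 2) * real (card A) powr (1/2)) \<and>
         (c1 * real q powr (real r - 3/8) \<le> real (card A) \<and>
          real (card A) \<le> c2 * real q powr (real r - 1/3) \<longrightarrow>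
            M \<ge> C * real (card A) ^ 2 / real q powr ((2 * real r - 1) / 2)) \<and>
         (real (card (ring_sumset R A A)) * real (card A) ^ 2 \<ge> c1 * real q powr (3 * real r - 1) \<and>
          real (card A) \<le> c2 * real q powr (real r - 3/8) \<longrightarrow>
            M \<ge> C * real q powr (real r / 3) * real (card A) powr (2/3))))"
    apply (rule exI[of _ "(min 1 c1)^2 / (4 * (max 1 c2)^3)"])
    apply (intro conjI allI impI)
     apply (rule C_facts(1)[OF c1 c2])
    apply (elim conjE)
    apply (rule main_instance[OF c1 c2 refl])
             apply assumption+
    done
qed

end
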